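(* Let $\Omega\subset\mathbb{P}(\mathbb{R}^d)$ be a properly convex domain and $K\subset\Omega$ a compact subset. There exist $\varepsilon>0$ and $L>0$ such that for every $k\in\{1,\dots,d-1\}$ and every $g\in\mathrm{Aut}(\Omega)$ with $\frac{\sigma_k}{\sigma_{k+1}}(g)>L$, we have $\inf_{x\in K}\mathrm{dist}(x,\mathbb{P}(\Xi_k(g)))>\varepsilon$.
   Context: An open set $\Omega\subset\mathbb{P}(\mathbb{R}^d)$ is a properly convex domain if its closure is a bounded convex subset of some affine chart. $\mathrm{Aut}(\Omega)$ is the group of $g\in\mathsf{GL}_d(\mathbb{R})$ with $g\Omega=\Omega$. For $g$ with singular values $\sigma_1(g)\ge\dots\ge\sigma_d(g)$ and Cartan decomposition $g=k_g\mathrm{diag}(\sigma_1(g),\dots,\sigma_d(g))k_g'$ ($k_g,k_g'\in\mathsf{O}(d)$), if $\sigma_k(g)>\sigma_{k+1}(g)$ then $\Xi_k(g):=k_g\langle e_1,\dots,e_k\rangle$. $\mathbb{P}(\mathbb{R}^d)$ carries the metric $d_{\mathbb{P}}([u],[v])=\sqrt{1-\frac{\langle u,v\rangle^2}{\|u\|^2\|v\|^2}}$ and $\mathrm{dist}(x,Y)$ is the minimal $d_{\mathbb{P}}$-distance from $x$ to $Y$. *)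

theory Defs
  imports "HOL-Analysis.Analysis"
begin

text \<open>Model: R^d is real^'n with d = CARD('n). A subset of P(R^d) is represented by
  the cone of all its nonzero representatives.\<close>

definition cone_set :: "(real^'n) set \<Rightarrow> bool" where
  "cone_set C \<longleftrightarrow> 0 \<notin> C \<and> (\<forall>v\<in>C. \<forall>c. c \<noteq> 0 \<longrightarrow> c *\<^sub>R v \<in> C)"

text \<open>Properly convex domain: open, connected (nonempty), and its closure in P(R^d) lies in
  the affine chart {phi \<noteq> 0}, where (identified with the hyperplane {phi = 1}) it is bounded
  and convex.\<close>
definition properly_convex_domain :: "(real^'n) set \<Rightarrow> bool" where
  "properly_convex_domain \<Omega> \<longleftrightarrow> cone_set \<Omega> \<and> \<Omega> \<noteq> {} \<and> open \<Omega> \<and>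
     (\<exists>\<phi>::real^'n. (\<forall>v \<in> closure \<Omega> - {0}. \<phi> \<bullet> v \<noteq> 0) \<and>
        connected {v \<in> \<Omega>. \<phi> \<bullet> v = 1} \<and>
        bounded {v \<in> closure \<Omega>. \<phi> \<bullet> v = 1} \<and>
        convex {v \<in> closure \<Omega>. \<phi> \<bullet> v = 1})"

definition Aut :: "(real^'n) set \<Rightarrow> (real^'n^'n) set" where
  "Aut \<Omega> = {g. invertible g \<and> (\<lambda>v. g *v v) ` \<Omega> = \<Omega>}"

text \<open>A fixed enumeration of the standard basis: index j is e_(basis_pos j), positions 1..d.\<close>
definition basis_pos :: "'n::finite \<Rightarrow> nat" where
  "basis_pos = (SOME p. bij_betw p (UNIV::'n set) {1..CARD('n)})"

definition diag_sv :: "(nat \<Rightarrow> real) \<Rightarrow> real^'n^'n" where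
  "diag_sv s = (\<chi> i j. if i = j then s (basis_pos i) else 0)"

definition cartan :: "real^'n^'n \<Rightarrow> real^'n^'n \<Rightarrow> (nat \<Rightarrow> real) \<Rightarrow> real^'n^'n \<Rightarrow> bool" where
  "cartan g K s K' \<longleftrightarrow> orthogonal_matrix K \<and> orthogonal_matrix K' \<and>
     (\<forall>i j. 1 \<le> i \<longrightarrow> i \<le> j \<longrightarrow> j \<le> CARD('n) \<longrightarrow> s j \<le> s i) \<and>
     (\<forall>i. 1 \<le> i \<longrightarrow> i \<le> CARD('n) \<longrightarrow> 0 \<le> s i) \<and>
     (\<forall>i. i < 1 \<or> CARD('n) < i \<longrightarrow> s i = 0) \<and>
     g = K ** diag_sv s ** K'"

definition sing_val :: "real^'n^'n \<Rightarrow> nat \<Rightarrow> real" where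
  "sing_val g = (SOME s. \<exists>K K'. cartan g K s K')"

text \<open>Xi_k(g) = k_g <e_1,...,e_k>  (well defined when sigma_k(g) > sigma_(k+1)(g)).\<close>
definition Xi :: "nat \<Rightarrow> real^'n^'n \<Rightarrow> (real^'n) set" where
  "Xi k g = (SOME V. \<exists>K K'. cartan g K (sing_val g) K' \<and>
      V = (\<lambda>v. K *v v) ` span {axis j 1 | j. basis_pos j \<le> k})"

definition proj_dist :: "real^'n \<Rightarrow> real^'n \<Rightarrow> real" where
  "proj_dist u v = sqrt (1 - (u \<bullet> v)\<^sup>2 / ((norm u)\<^sup>2 * (norm v)\<^sup>2))"

definition dist_to_proj :: "real^'n \<Rightarrow> (real^'n) set \<Rightarrow> real" where
  "dist_to_proj x V = Inf {proj_dist x v | v. v \<in> V \<and> v \<noteq> 0}"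

end

theory Submission
  imports Defs
begin


lemma inner_mat_transpose:
  fixes A :: "real^'n^'m"
  shows "(A *v x) \<bullet> y = x \<bullet> (transpose A *v y)"
  apply (simp add: inner_vec_def matrix_vector_mult_def transpose_def sum_distrib_left
      sum_distrib_right)
  apply (subst sum.swap)
  apply (simp add: mult_ac)
  done

lemma orth_inner:
  fixes Q :: "real^'n^'n"
  assumes "orthogonal_matrix Q"
  shows "(Q *v x) \<bullet> (Q *v y) = x \<bullet> y"
proof -
  have "transpose Q ** Q = mat 1" using assms by (simp add: orthogonal_matrix_def)
  then show ?thesis by (simp add: inner_mat_transpose matrix_vector_mul_assoc)
qed

lemma orth_norm:
  fixes Q :: "real^'n^'n"
  assumes "orthogonal_matrix Q"
  shows "norm (Q *v x) = norm x"
  using orth_inner[OF assms, of x x] by (simp add: norm_eq_sqrt_inner)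

lemma basis_pos_bij: "bij_betw (basis_pos :: 'n::finite \<Rightarrow> nat) UNIV {1..CARD('n)}"
proof -
  have "\<exists>p. bij_betw p (UNIV::'n set) {1..CARD('n)}"
    by (rule finite_same_card_bij) auto
  then show ?thesis unfolding basis_pos_def by (rule someI_ex)
qed

lemma basis_pos_range: "1 \<le> basis_pos (j::'n::finite) \<and> basis_pos j \<le> CARD('n)"
  using bij_betwE[OF basis_pos_bij] by auto

lemma basis_pos_inj: "basis_pos (i::'n::finite) = basis_pos j \<Longrightarrow> i = j"
  using basis_pos_bij unfolding bij_betw_def inj_on_def by auto

lemma basis_pos_surj: "1 \<le> m \<Longrightarrow> m \<le> CARD('n) \<Longrightarrow> \<exists>j::'n::finite. basis_pos j = m"
  using basis_pos_bij unfolding bij_betw_def by (metis atLeastAtMost_iff imageE)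

definition greedy_ok :: "real^'n^'n \<Rightarrow> nat \<Rightarrow> (nat \<Rightarrow> real^'n) \<Rightarrow> bool" where
  "greedy_ok g n u \<longleftrightarrow> (\<forall>i<n. \<forall>j<n. u i \<bullet> u j = (if i = j then 1 else 0)) \<and>
     (\<forall>i<n. \<forall>w. norm w = 1 \<and> (\<forall>j<i. w \<bullet> u j = 0) \<longrightarrow> norm (g *v w) \<le> norm (g *v u i))"

lemma greedy_exists:
  fixes g :: "real^'n^'n"
  shows "n \<le> CARD('n) \<Longrightarrow> \<exists>u. greedy_ok g n u"
proof (induction n)
  case 0
  then show ?case by (simp add: greedy_ok_def)
next
  case (Suc n)
  then obtain u where u: "greedy_ok g n u" by auto
  define S where "S = {w::real^'n. norm w = 1 \<and> (\<forall>j<n. w \<bullet> u j = 0)}"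
  have cS: "compact S"
  proof -
    have "closed S" unfolding S_def
      by (intro closed_Collect_conj closed_Collect_all closed_Collect_imp closed_Collect_eq continuous_intros) auto
    moreover have "bounded S"
      by (rule bounded_subset[OF bounded_cball[of 0 1]]) (auto simp: S_def)
    ultimately show ?thesis using compact_eq_bounded_closed by blast
  qed
  have "dim (u ` {..<n}) \<le> card (u ` {..<n})"
    by (rule dim_le_card) (auto intro: span_base)
  also have "\<dots> \<le> n" using card_image_le[of "{..<n}" u] by simp
  finally have "dim (u ` {..<n}) < DIM(real^'n)" using Suc.prems by simp
  then obtain a :: "real^'n" where a: "a \<noteq> 0" "span (u ` {..<n}) \<subseteq> {x. a \<bullet> x = 0}"
    using lowdim_subset_hyperplane by blast
  have "a /\<^sub>R norm a \<in> S"
  proof -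
    have "a \<bullet> u j = 0" if "j < n" for j
      using a(2) span_base[of "u j" "u ` {..<n}"] that by auto
    then show ?thesis using a(1) unfolding S_def by (simp add: inner_commute)
  qed
  then have nS: "S \<noteq> {}" by auto
  have cont: "continuous_on S (\<lambda>y. norm (g *v y))"
    by (rule continuous_on_norm[OF matrix_vector_mult_linear_continuous_on])
  obtain w where w: "w \<in> S" "\<And>y. y \<in> S \<Longrightarrow> norm (g *v y) \<le> norm (g *v w)"
    using continuous_attains_sup[OF cS nS cont] by blast
  define u' where "u' = u(n := w)"
  have "greedy_ok g (Suc n) u'"
    unfolding greedy_ok_def
  proof (intro conjI allI impI)
    fix i j assume ij: "i < Suc n" "j < Suc n"
    show "u' i \<bullet> u' j = (if i = j then 1 else 0)"
    proof -
      have wS: "norm w = 1" "\<And>j. j < n \<Longrightarrow> w \<bullet> u j = 0" using w(1) unfolding S_def by auto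
      have uo: "\<And>i j. i < n \<Longrightarrow> j < n \<Longrightarrow> u i \<bullet> u j = (if i = j then 1 else 0)"
        using u unfolding greedy_ok_def by blast
      consider "i < n" "j < n" | "i = n" "j < n" | "i < n" "j = n" | "i = n" "j = n"
        using ij by linarith
      then show ?thesis
      proof cases
        case 1 then show ?thesis using uo by (simp add: u'_def)
      next
        case 2 then show ?thesis using wS by (simp add: u'_def)
      next
        case 3 then show ?thesis using wS by (simp add: u'_def inner_commute)
      next
        case 4 then show ?thesis using wS by (simp add: u'_def norm_eq_1)
      qed
    qed
  next
    fix i w' assume i: "i < Suc n" and w': "norm w' = 1 \<and> (\<forall>j<i. w' \<bullet> u' j = 0)"
    show "norm (g *v w') \<le> norm (g *v u' i)"
    proof (cases "i = n")
      case True
      then have "w' \<in> S" using w' unfolding S_def u'_def by auto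
      then show ?thesis using w(2) True by (simp add: u'_def)
    next
      case False
      then have "i < n" using i by simp
      have "\<forall>j<i. w' \<bullet> u j = 0" using w' \<open>i < n\<close> by (simp add: u'_def)
      then have "norm (g *v w') \<le> norm (g *v u i)"
        using u w' \<open>i < n\<close> unfolding greedy_ok_def by blast
      then show ?thesis using \<open>i < n\<close> by (simp add: u'_def)
    qed
  qed
  then show ?case by blast
qed



lemma var_orth:
  fixes g :: "real^'n^'n"
  assumes u1: "norm u = 1" and w1: "norm w = 1" and uw: "u \<bullet> w = 0"
   and H: "\<And>t. norm (g *v (u + t *\<^sub>R w)) \<le> norm (g *v u) * norm (u + t *\<^sub>R w)"
  shows "(g *v u) \<bullet> (g *v w) = 0"
proof -
  define a where "a = (g *v u) \<bullet> (g *v w)"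
  define l where "l = (g *v u) \<bullet> (g *v u)"
  define m where "m = (g *v w) \<bullet> (g *v w)"
  have key: "2 * t * a \<le> t\<^sup>2 * (l - m)" for t
  proof -
    have e1: "(norm (g *v (u + t *\<^sub>R w)))\<^sup>2 = l + 2 * t * a + t\<^sup>2 * m"
      unfolding power2_norm_eq_inner a_def l_def m_def
      by (simp add: matrix_vector_right_distrib matrix_vector_mult_scaleR inner_add_left
          inner_add_right inner_commute power2_eq_square algebra_simps)
    have e2: "(norm (u + t *\<^sub>R w))\<^sup>2 = 1 + t\<^sup>2"
      using u1 w1 uw unfolding power2_norm_eq_inner
      by (simp add: inner_add_left inner_add_right inner_commute power2_eq_square norm_eq_1)
    have e3: "(norm (g *v u))\<^sup>2 = l" unfolding l_def by (simp add: power2_norm_eq_inner)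
    have "(norm (g *v (u + t *\<^sub>R w)))\<^sup>2 \<le> (norm (g *v u) * norm (u + t *\<^sub>R w))\<^sup>2"
      using H[of t] by (intro power_mono) auto
    then have "l + 2 * t * a + t\<^sup>2 * m \<le> l * (1 + t\<^sup>2)"
      using e1 e2 e3 by (simp add: power_mult_distrib)
    then show ?thesis by (simp add: algebra_simps)
  qed
  define C where "C = \<bar>l - m\<bar> + 1"
  have C: "C > 0" unfolding C_def by simp
  have "2 * (a / C) * a \<le> (a / C)\<^sup>2 * (l - m)" using key .
  then have "2 * (a / C) * a * C\<^sup>2 \<le> (a / C)\<^sup>2 * (l - m) * C\<^sup>2"
    using C by (intro mult_right_mono) auto
  moreover have "2 * (a / C) * a * C\<^sup>2 = 2 * a\<^sup>2 * C" using C
    by (simp add: power2_eq_square)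
  moreover have "(a / C)\<^sup>2 * (l - m) * C\<^sup>2 = a\<^sup>2 * (l - m)" using C
    by (simp add: power2_eq_square)
  ultimately have "2 * a\<^sup>2 * C \<le> a\<^sup>2 * (l - m)" by simp
  also have "\<dots> \<le> a\<^sup>2 * (C - 1)" unfolding C_def by (intro mult_left_mono) auto
  finally have "a\<^sup>2 * (C + 1) \<le> 0" by (simp add: algebra_simps)
  then have "a\<^sup>2 \<le> 0" using C by (simp add: mult_le_0_iff)
  then show ?thesis unfolding a_def by simp
qed

lemma greedy_dec:
  assumes "greedy_ok g n u" "i < j" "j < n"
  shows "norm (g *v u j) \<le> norm (g *v u i)"
proof -
  have "norm (u j) = 1" using assms unfolding greedy_ok_def by (auto simp: norm_eq_1)
  moreover have "\<forall>l<i. u j \<bullet> u l = 0" using assms unfolding greedy_ok_def by auto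
  ultimately show ?thesis using assms unfolding greedy_ok_def by auto
qed

lemma greedy_orth:
  fixes g :: "real^'n^'n"
  assumes G: "greedy_ok g n u" and ij: "i < j" "j < n"
  shows "(g *v u i) \<bullet> (g *v u j) = 0"
proof (rule var_orth)
  have o: "\<And>a b. a < n \<Longrightarrow> b < n \<Longrightarrow> u a \<bullet> u b = (if a = b then 1 else 0)"
    using G unfolding greedy_ok_def by blast
  have mx: "\<And>w. norm w = 1 \<Longrightarrow> (\<forall>l<i. w \<bullet> u l = 0) \<Longrightarrow> norm (g *v w) \<le> norm (g *v u i)"
    using G ij unfolding greedy_ok_def by auto
  show u1: "norm (u i) = 1" using o[of i i] ij by (simp add: norm_eq_1)
  show w1: "norm (u j) = 1" using o[of j j] ij by (simp add: norm_eq_1)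
  show uw: "u i \<bullet> u j = 0" using o[of i j] ij by simp
  fix t
  define v where "v = u i + t *\<^sub>R u j"
  have "(norm v)\<^sup>2 = 1 + t\<^sup>2"
    using u1 w1 uw unfolding power2_norm_eq_inner v_def
    by (simp add: inner_add_left inner_add_right inner_commute power2_eq_square norm_eq_1)
  then have nv: "norm v > 0" by (metis add_pos_nonneg zero_less_one zero_le_power2 zero_less_norm_iff norm_zero power2_eq_square mult_zero_left less_irrefl)
  have "\<forall>l<i. (v /\<^sub>R norm v) \<bullet> u l = 0"
    using o ij unfolding v_def by (auto simp: inner_add_left)
  moreover have "norm (v /\<^sub>R norm v) = 1" using nv by simp
  ultimately have "norm (g *v (v /\<^sub>R norm v)) \<le> norm (g *v u i)" using mx by blast
  moreover have "g *v (v /\<^sub>R norm v) = (g *v v) /\<^sub>R norm v"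
    by (simp add: matrix_vector_mult_scaleR)
  ultimately have "norm (g *v v) / norm v \<le> norm (g *v u i)"
    using nv by (simp add: divide_inverse mult.commute)
  then show "norm (g *v (u i + t *\<^sub>R u j)) \<le> norm (g *v u i) * norm (u i + t *\<^sub>R u j)"
    using nv unfolding v_def by (simp add: divide_le_eq mult.commute)
qed



lemma inv_nonzero:
  fixes g :: "real^'n^'n"
  assumes "invertible g" "x \<noteq> 0"
  shows "g *v x \<noteq> 0"
proof
  assume h: "g *v x = 0"
  obtain B where "B ** g = mat 1" using assms(1) unfolding invertible_def by blast
  then have "x = B *v (g *v x)" by (simp add: matrix_vector_mul_assoc)
  then show False using h assms(2) by simp
qed

lemma svd_exists:
  fixes g :: "real^'n^'n"
  assumes inv: "invertible g"
  shows "\<exists>K s K'. cartan g K s K'"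
proof -
  obtain u where G: "greedy_ok g CARD('n) u" using greedy_exists by blast
  have uo: "\<And>a b. a < CARD('n) \<Longrightarrow> b < CARD('n) \<Longrightarrow> u a \<bullet> u b = (if a = b then 1 else 0)"
    using G unfolding greedy_ok_def by blast
  define v where "v j = u (basis_pos j - 1)" for j :: 'n
  define s where "s m = (if 1 \<le> m \<and> m \<le> CARD('n) then norm (g *v u (m - 1)) else 0)" for m
  define K' :: "real^'n^'n" where "K' = (\<chi> j. v j)"
  define K :: "real^'n^'n" where "K = (\<chi> i j. (g *v v j) $ i / s (basis_pos j))"
  have pr: "1 \<le> basis_pos j \<and> basis_pos j \<le> CARD('n)" for j :: 'n using basis_pos_range by blast
  have vo: "v i \<bullet> v j = (if i = j then 1 else 0)" for i j
  proof -
    have "(basis_pos i - 1 = basis_pos j - 1) = (i = j)"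
      using pr[of i] pr[of j] basis_pos_inj[of i j] by auto
    then show ?thesis unfolding v_def using uo[of "basis_pos i - 1" "basis_pos j - 1"] pr[of i] pr[of j]
      by auto
  qed
  have vn: "norm (v j) = 1" for j using vo[of j j] by (simp add: norm_eq_1)
  have sp: "s (basis_pos j) = norm (g *v v j)" for j :: 'n using pr[of j] unfolding s_def v_def by simp
  have spos: "s (basis_pos j) > 0" for j :: 'n
  proof -
    have "v j \<noteq> 0" using vn[of j] by auto
    then show ?thesis using sp inv_nonzero[OF inv] by auto
  qed
  have gvo: "(g *v v i) \<bullet> (g *v v j) = 0" if "i \<noteq> j" for i j :: 'n
  proof -
    have "basis_pos i \<noteq> basis_pos j" using that basis_pos_inj by blast
    then have ne: "basis_pos i - 1 \<noteq> basis_pos j - 1"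
      using pr[of i] pr[of j] by linarith
    have lt: "basis_pos i - 1 < CARD('n)" "basis_pos j - 1 < CARD('n)" using pr[of i] pr[of j] by auto
    show ?thesis
    proof (cases "basis_pos i - 1 < basis_pos j - 1")
      case True then show ?thesis using greedy_orth[OF G True lt(2)] unfolding v_def by simp
    next
      case False
      then have "basis_pos j - 1 < basis_pos i - 1" using ne by simp
      then have "(g *v v j) \<bullet> (g *v v i) = 0"
        using greedy_orth[OF G _ lt(1)] unfolding v_def by simp
      then show ?thesis by (simp add: inner_commute)
    qed
  qed
  have oK': "orthogonal_matrix K'"
    unfolding orthogonal_matrix_orthonormal_rows
  proof (intro conjI allI impI)
    fix i j :: 'n
    have r: "row i K' = v i" for i unfolding row_def K'_def by (simp add: vec_eq_iff)
    show "norm (row i K') = 1" using r vn by simp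
    assume "i \<noteq> j"
    then show "orthogonal (row i K') (row j K')" using r vo unfolding orthogonal_def by simp
  qed
  have cK: "column j K = (g *v v j) /\<^sub>R s (basis_pos j)" for j
    unfolding column_def K_def by (simp add: vec_eq_iff divide_inverse mult.commute)
  have oK: "orthogonal_matrix K"
    unfolding orthogonal_matrix_orthonormal_columns
  proof (intro conjI allI impI)
    fix i j :: 'n
    show "norm (column i K) = 1" using cK[of i] sp[of i] spos[of i] by simp
    assume "i \<noteq> j"
    then show "orthogonal (column i K) (column j K)" using cK gvo unfolding orthogonal_def by simp
  qed
  have KD: "K ** diag_sv s = g ** transpose K'"
  proof -
    have "(K ** diag_sv s) $ i $ j = (g ** transpose K') $ i $ j" for i j
    proof -
      have "(K ** diag_sv s) $ i $ j = (\<Sum>l\<in>UNIV. K $ i $ l * (if l = j then s (basis_pos l) else 0))"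
        unfolding matrix_matrix_mult_def diag_sv_def by simp
      also have "\<dots> = K $ i $ j * s (basis_pos j)"
        by (simp add: if_distrib[of "\<lambda>x. K $ i $ _ * x"] cong: if_cong)
      also have "\<dots> = (g *v v j) $ i" unfolding K_def using spos[of j] by simp
      also have "\<dots> = (g ** transpose K') $ i $ j"
        unfolding matrix_matrix_mult_def matrix_vector_mult_def transpose_def K'_def by simp
      finally show ?thesis .
    qed
    then show ?thesis by (simp add: vec_eq_iff)
  qed
  have "K ** diag_sv s ** K' = g"
  proof -
    have "K ** diag_sv s ** K' = g ** (transpose K' ** K')" by (simp add: KD matrix_mul_assoc)
    also have "\<dots> = g" using oK' by (simp add: orthogonal_matrix_def)
    finally show ?thesis .
  qed
  moreover have "\<forall>i j. 1 \<le> i \<longrightarrow> i \<le> j \<longrightarrow> j \<le> CARD('n) \<longrightarrow> s j \<le> s i"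
  proof (intro allI impI)
    fix i j :: nat assume ij: "1 \<le> i" "i \<le> j" "j \<le> CARD('n)"
    show "s j \<le> s i"
    proof (cases "i = j")
      case False
      then have "i - 1 < j - 1" "j - 1 < CARD('n)" using ij by auto
      then show ?thesis using greedy_dec[OF G] ij unfolding s_def by auto
    qed simp
  qed
  moreover have "\<forall>i. 1 \<le> i \<longrightarrow> i \<le> CARD('n) \<longrightarrow> 0 \<le> s i" unfolding s_def by simp
  moreover have "\<forall>i. i < 1 \<or> CARD('n) < i \<longrightarrow> s i = 0" unfolding s_def by auto
  ultimately have "cartan g K s K'" using oK oK' unfolding cartan_def by simp
  then show ?thesis by blast
qed



lemma cone_bound:
  fixes \<Omega> K :: "(real^'n) set"
  assumes pcd: "properly_convex_domain \<Omega>" and cK: "compact K" and KO: "K \<subseteq> \<Omega>"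
  shows "\<exists>C>0. \<forall>h\<in>Aut \<Omega>. \<forall>x\<in>K. \<forall>u. norm (h *v u) * norm x \<le> C * norm u * norm (h *v x)"
proof -
  have z: "0 \<notin> \<Omega>" and sc: "\<And>v c. v \<in> \<Omega> \<Longrightarrow> c \<noteq> 0 \<Longrightarrow> c *\<^sub>R v \<in> \<Omega>"
    and ne: "\<Omega> \<noteq> {}" and op: "open \<Omega>"
    using pcd unfolding properly_convex_domain_def cone_set_def by auto
  obtain \<phi> :: "real^'n" where nz: "\<And>v. v \<in> closure \<Omega> \<Longrightarrow> v \<noteq> 0 \<Longrightarrow> \<phi> \<bullet> v \<noteq> 0"
    and bd: "bounded {v \<in> closure \<Omega>. \<phi> \<bullet> v = 1}"
    using pcd unfolding properly_convex_domain_def by blast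
  obtain R where R: "R > 0" "\<And>v. v \<in> closure \<Omega> \<Longrightarrow> \<phi> \<bullet> v = 1 \<Longrightarrow> norm v \<le> R"
    using bd unfolding bounded_pos by blast
  have nzO: "\<phi> \<bullet> w \<noteq> 0" if "w \<in> \<Omega>" for w
    using nz[of w] that z closure_subset by blast
  have R1: "norm w \<le> R * \<bar>\<phi> \<bullet> w\<bar>" if w: "w \<in> \<Omega>" for w
  proof -
    have a: "\<phi> \<bullet> w \<noteq> 0" using nzO w .
    define w' where "w' = (1 / (\<phi> \<bullet> w)) *\<^sub>R w"
    have "w' \<in> \<Omega>" unfolding w'_def using sc[OF w] a by simp
    then have "w' \<in> closure \<Omega>" using closure_subset by blast
    moreover have "\<phi> \<bullet> w' = 1" unfolding w'_def using a by simp
    ultimately have "norm w' \<le> R" using R(2) by blast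
    moreover have "norm w' = norm w / \<bar>\<phi> \<bullet> w\<bar>" unfolding w'_def by simp
    ultimately show ?thesis using a by (simp add: divide_le_eq mult.commute)
  qed
  obtain w0 where "w0 \<in> \<Omega>" using ne by blast
  then have "\<phi> \<noteq> 0" using nzO by fastforce
  then have np: "norm \<phi> > 0" by simp
  obtain r where r: "r > 0" "(\<Union>x\<in>K. ball x r) \<subseteq> \<Omega>"
    using compact_subset_open_imp_ball_epsilon_subset[OF cK op KO] by blast
  have rb: "\<And>x y. x \<in> K \<Longrightarrow> dist x y < r \<Longrightarrow> y \<in> \<Omega>" using r(2) mem_ball by blast
  obtain M where M: "M > 0" "\<And>x. x \<in> K \<Longrightarrow> norm x \<le> M"
    using compact_imp_bounded[OF cK] unfolding bounded_pos by blast
  define C where "C = 2 * R * (2 * M + r) * norm \<phi> * M / r\<^sup>2"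
  have Cpos: "C > 0" unfolding C_def using R M r np by simp
  have main: "norm (h *v u) * norm x \<le> C * norm u * norm (h *v x)"
    if h: "h \<in> Aut \<Omega>" and x: "x \<in> K" for h x u
  proof -
    have hO: "\<And>v. v \<in> \<Omega> \<Longrightarrow> h *v v \<in> \<Omega>" using h unfolding Aut_def by blast
    define \<psi> where "\<psi> = transpose h *v \<phi>"
    have psi: "\<psi> \<bullet> v = \<phi> \<bullet> (h *v v)" for v
      unfolding \<psi>_def using inner_mat_transpose[of h v \<phi>] by (simp add: inner_commute)
    have xO: "x \<in> \<Omega>" using x KO by blast
    have a: "r * norm \<psi> \<le> \<bar>\<psi> \<bullet> x\<bar>"
    proof (rule ccontr)
      assume "\<not> r * norm \<psi> \<le> \<bar>\<psi> \<bullet> x\<bar>"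
      then have lt: "\<bar>\<psi> \<bullet> x\<bar> < r * norm \<psi>" by simp
      have "0 < r * norm \<psi>" using lt abs_ge_zero[of "\<psi> \<bullet> x"] by linarith
      then have pn: "norm \<psi> > 0" using r(1) by (simp add: zero_less_mult_iff)
      define z where "z = x - ((\<psi> \<bullet> x) / (norm \<psi>)\<^sup>2) *\<^sub>R \<psi>"
      have "dist x z = norm (((\<psi> \<bullet> x) / (norm \<psi>)\<^sup>2) *\<^sub>R \<psi>)"
        unfolding z_def dist_norm by simp
      also have "\<dots> = \<bar>\<psi> \<bullet> x\<bar> / (norm \<psi>)\<^sup>2 * norm \<psi>" by simp
      also have "\<dots> = \<bar>\<psi> \<bullet> x\<bar> / norm \<psi>" using pn by (simp add: power2_eq_square)
      also have "\<dots> < r" using lt pn by (simp add: divide_less_eq)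
      finally have "z \<in> \<Omega>" using rb[OF x] by blast
      moreover have "\<psi> \<bullet> z = 0"
        unfolding z_def using pn by (simp add: inner_diff_right power2_norm_eq_inner)
      ultimately show False using psi[of z] nzO[OF hO] by simp
    qed
    have b: "r * norm \<psi> \<le> norm (h *v x) * norm \<phi>"
      using a psi[of x] Cauchy_Schwarz_ineq2[of \<phi> "h *v x"] by (simp add: mult.commute)
    have up: "norm (h *v y) \<le> R * norm \<psi> * norm y" if "y \<in> \<Omega>" for y
    proof -
      have "norm (h *v y) \<le> R * \<bar>\<phi> \<bullet> (h *v y)\<bar>" using R1 hO that by blast
      also have "\<dots> = R * \<bar>\<psi> \<bullet> y\<bar>" using psi by simp
      also have "\<dots> \<le> R * (norm \<psi> * norm y)"
        using R(1) Cauchy_Schwarz_ineq2[of \<psi> y] by (intro mult_left_mono) auto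
      finally show ?thesis by (simp add: mult.assoc)
    qed
    show ?thesis
    proof (cases "u = 0")
      case True then show ?thesis by simp
    next
      case False
      then have nu: "norm u > 0" by simp
      define u' where "u' = (r / (2 * norm u)) *\<^sub>R u"
      have nu': "norm u' = r / 2" unfolding u'_def using nu r(1) by simp
      have "dist x (x + u') < r" using nu' r(1) by (simp add: dist_norm)
      then have xu: "x + u' \<in> \<Omega>" using rb[OF x] by blast
      have "norm (h *v u') = norm (h *v (x + u') - h *v x)"
        by (simp add: matrix_vector_right_distrib)
      also have "\<dots> \<le> norm (h *v (x + u')) + norm (h *v x)" by (rule norm_triangle_ineq4)
      also have "\<dots> \<le> R * norm \<psi> * norm (x + u') + R * norm \<psi> * norm x"
        using up[OF xu] up[OF xO] by simp
      also have "\<dots> \<le> R * norm \<psi> * (M + r / 2) + R * norm \<psi> * M"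
      proof -
        have "norm (x + u') \<le> M + r / 2" using norm_triangle_ineq[of x u'] M(2)[OF x] nu' by simp
        moreover have "norm x \<le> M" using M(2)[OF x] .
        moreover have "0 \<le> R * norm \<psi>" using R(1) by simp
        ultimately show ?thesis by (intro add_mono mult_left_mono) auto
      qed
      finally have hu': "norm (h *v u') \<le> R * norm \<psi> * (2 * M + r / 2)" by (simp add: algebra_simps)
      have "h *v u = (2 * norm u / r) *\<^sub>R (h *v u')"
        unfolding u'_def using nu r(1) by (simp add: matrix_vector_mult_scaleR)
      then have "norm (h *v u) = (2 * norm u / r) * norm (h *v u')" using nu r(1) by simp
      also have "\<dots> \<le> (2 * norm u / r) * (R * norm \<psi> * (2 * M + r))"
      proof -
        have "R * norm \<psi> * (2 * M + r / 2) \<le> R * norm \<psi> * (2 * M + r)"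
          using r(1) R(1) by (intro mult_left_mono) auto
        then have "norm (h *v u') \<le> R * norm \<psi> * (2 * M + r)" using hu' by linarith
        then show ?thesis using nu r(1) by (intro mult_left_mono) auto
      qed
      also have "\<dots> = (2 * norm u / r) * R * (2 * M + r) * norm \<psi>" by simp
      also have "\<dots> \<le> (2 * norm u / r) * R * (2 * M + r) * (norm (h *v x) * norm \<phi> / r)"
        using b r(1) nu R(1) M(1) by (intro mult_left_mono) (auto simp: pos_le_divide_eq mult.commute)
      finally have hu: "norm (h *v u) \<le> (2 * norm u / r) * R * (2 * M + r) * (norm (h *v x) * norm \<phi> / r)" .
      have "norm (h *v u) * norm x \<le> norm (h *v u) * M" using M(2)[OF x] by (simp add: mult_left_mono)
      also have "\<dots> \<le> (2 * norm u / r) * R * (2 * M + r) * (norm (h *v x) * norm \<phi> / r) * M"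
        using mult_right_mono[OF hu, of M] M(1) by simp
      also have "\<dots> = C * norm u * norm (h *v x)" unfolding C_def by (simp add: power2_eq_square field_simps)
      finally show ?thesis .
    qed
  qed
  show ?thesis using Cpos main by blast
qed



lemma diag_mult: "diag_sv s *v w = (\<chi> i. s (basis_pos i) * w $ i)"
proof -
  have "(\<Sum>j\<in>UNIV. (if i = j then s (basis_pos i) else 0) * w $ j) = s (basis_pos i) * w $ i" for i :: 'a
  proof -
    have "(\<Sum>j\<in>UNIV. (if i = j then s (basis_pos i) else 0) * w $ j)
        = (\<Sum>j\<in>UNIV. if i = j then s (basis_pos i) * w $ j else 0)" by (rule sum.cong) auto
    also have "\<dots> = s (basis_pos i) * w $ i" by simp
    finally show ?thesis .
  qed
  then show ?thesis by (simp add: vec_eq_iff matrix_vector_mult_def diag_sv_def)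
qed

lemma cartan_apply:
  assumes "cartan g Q s Q'"
  shows "g *v y = Q *v (diag_sv s *v (Q' *v y))"
  using assms unfolding cartan_def by (simp add: matrix_vector_mul_assoc matrix_mul_assoc)

lemma cartan_pos:
  fixes g :: "real^'n^'n" and j :: 'n
  assumes c: "cartan g Q s Q'" and inv: "invertible g"
  shows "s (basis_pos j) > 0"
proof -
  have oQ': "orthogonal_matrix Q'" and nn: "s (basis_pos j) \<ge> 0"
    using c basis_pos_range[of j] unfolding cartan_def by auto
  have "transpose Q' *v axis j 1 \<noteq> 0"
    using orth_norm[of "transpose Q'" "axis j 1"] oQ' by (auto simp: orthogonal_matrix_transpose)
  then have ne: "g *v (transpose Q' *v axis j 1) \<noteq> 0" using inv_nonzero[OF inv] by blast
  have "Q' ** transpose Q' = mat 1" using oQ' unfolding orthogonal_matrix_def by simp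
  then have e: "Q' *v (transpose Q' *v axis j 1) = axis j 1" by (metis matrix_vector_mul_assoc matrix_vector_mul_lid)
  show ?thesis
  proof (rule ccontr)
    assume "\<not> ?thesis"
    then have z: "s (basis_pos j) = 0" using nn by simp
    have "diag_sv s *v axis j 1 = (0::real^'n)"
      unfolding diag_mult by (simp add: vec_eq_iff axis_def z)
    then show False using ne cartan_apply[OF c] e by simp
  qed
qed

lemma cartan_inv:
  fixes g :: "real^'n^'n"
  assumes c: "cartan g Q s Q'" and inv: "invertible g" and hg: "h ** g = mat 1"
  shows "h *v (Q *v w) = transpose Q' *v (\<chi> j. w $ j / s (basis_pos j))"
proof -
  define q where "q = (\<chi> j. w $ j / s (basis_pos j))"
  have oQ': "orthogonal_matrix Q'" using c unfolding cartan_def by auto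
  have "Q' ** transpose Q' = mat 1" using oQ' unfolding orthogonal_matrix_def by simp
  then have e: "Q' *v (transpose Q' *v q) = q" by (metis matrix_vector_mul_assoc matrix_vector_mul_lid)
  have "diag_sv s *v q = w"
    unfolding diag_mult q_def using cartan_pos[OF c inv] by (simp add: vec_eq_iff less_imp_neq[symmetric])
  then have "g *v (transpose Q' *v q) = Q *v w" using cartan_apply[OF c] e by simp
  then have "h *v (Q *v w) = h *v (g *v (transpose Q' *v q))" by simp
  also have "\<dots> = transpose Q' *v q" using hg by (simp add: matrix_vector_mul_assoc)
  finally show ?thesis unfolding q_def .
qed

lemma norm_sq_vec: "(norm (w::real^'n))\<^sup>2 = (\<Sum>j\<in>UNIV. (w $ j)\<^sup>2)"
  unfolding power2_norm_eq_inner inner_vec_def by (simp add: power2_eq_square)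

lemma span_axis_zero:
  assumes "w \<in> span {axis j (1::real) | j. basis_pos j \<le> k}" "k < basis_pos i"
  shows "w $ i = 0"
proof -
  have "subspace {w::real^'n. \<forall>i. k < basis_pos i \<longrightarrow> w $ i = 0}"
    unfolding subspace_def by auto
  moreover have "\<forall>i. k < basis_pos i \<longrightarrow> w' $ i = 0" if "w' \<in> {axis j (1::real) | j. basis_pos j \<le> k}" for w'
    using that by (auto simp: axis_def)
  ultimately have "\<forall>i. k < basis_pos i \<longrightarrow> w $ i = 0"
    using span_induct[OF assms(1), of "\<lambda>w. \<forall>i. k < basis_pos i \<longrightarrow> w $ i = 0"] by blast
  then show ?thesis using assms(2) by blast
qed

lemma proj_bound:
  fixes Q :: "real^'n^'n"
  assumes oQ: "orthogonal_matrix Q" and x0: "x \<noteq> 0"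
    and v: "v \<in> (\<lambda>v. Q *v v) ` span {axis j 1 | j. basis_pos j \<le> k}" and v0: "v \<noteq> 0"
  shows "sqrt ((\<Sum>j\<in>UNIV. if basis_pos j \<le> k then 0 else ((transpose Q *v x) $ j)\<^sup>2) / (norm x)\<^sup>2)
         \<le> proj_dist x v"
proof -
  obtain w where w: "w \<in> span {axis j 1 | j. basis_pos j \<le> k}" and vw: "v = Q *v w" using v by blast
  define y where "y = transpose Q *v x"
  have "Q ** transpose Q = mat 1" using oQ unfolding orthogonal_matrix_def by simp
  then have xy: "x = Q *v y" unfolding y_def by (metis matrix_vector_mul_assoc matrix_vector_mul_lid)
  define y' where "y' = (\<chi> i. if basis_pos i \<le> k then y $ i else 0)"
  define A where "A = (\<Sum>j\<in>UNIV. if basis_pos j \<le> k then (y $ j)\<^sup>2 else 0)"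
  define B where "B = (\<Sum>j\<in>UNIV. if basis_pos j \<le> k then 0 else (y $ j)\<^sup>2)"
  have AB: "A + B = (norm x)\<^sup>2"
  proof -
    have "A + B = (\<Sum>j\<in>UNIV. (y $ j)\<^sup>2)" unfolding A_def B_def sum.distrib[symmetric]
      by (rule sum.cong) auto
    also have "\<dots> = (norm y)\<^sup>2" by (simp add: norm_sq_vec)
    also have "\<dots> = (norm x)\<^sup>2" using xy orth_norm[OF oQ] by simp
    finally show ?thesis .
  qed
  have wz: "w $ i = 0" if "k < basis_pos i" for i using span_axis_zero[OF w that] .
  have "x \<bullet> v = y \<bullet> w" using xy vw orth_inner[OF oQ] by simp
  also have "\<dots> = y' \<bullet> w" unfolding inner_vec_def y'_def
    by (rule sum.cong) (auto simp: wz)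
  finally have xv: "x \<bullet> v = y' \<bullet> w" .
  have yy: "y' \<bullet> y' = A" unfolding inner_vec_def y'_def A_def
    by (rule sum.cong) (auto simp: power2_eq_square)
  have ww: "w \<bullet> w = (norm v)\<^sup>2" using vw orth_norm[OF oQ] by (simp add: power2_norm_eq_inner)
  have CS: "(x \<bullet> v)\<^sup>2 \<le> A * (norm v)\<^sup>2" using Cauchy_Schwarz_ineq[of y' w] xv yy ww by simp
  have nx: "(norm x)\<^sup>2 > 0" using x0 by simp
  have nv: "(norm v)\<^sup>2 > 0" using v0 by simp
  have "(x \<bullet> v)\<^sup>2 / ((norm x)\<^sup>2 * (norm v)\<^sup>2) \<le> A * (norm v)\<^sup>2 / ((norm x)\<^sup>2 * (norm v)\<^sup>2)"
    using CS nx nv by (intro divide_right_mono) auto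
  also have "\<dots> = A / (norm x)\<^sup>2" using nv by simp
  finally have "B / (norm x)\<^sup>2 \<le> 1 - (x \<bullet> v)\<^sup>2 / ((norm x)\<^sup>2 * (norm v)\<^sup>2)"
    using AB nx by (simp add: diff_divide_distrib[symmetric] field_simps)
  then show ?thesis unfolding proj_dist_def B_def y_def by (rule real_sqrt_le_mono)
qed



theorem lemma4p1:
  fixes \<Omega> K :: "(real^'n) set"
  assumes "properly_convex_domain \<Omega>" and "compact K" and "K \<subseteq> \<Omega>"
  shows "\<exists>\<epsilon>>0. \<exists>L>0. \<forall>k \<in> {1..CARD('n) - 1}. \<forall>g \<in> Aut \<Omega>.
           sing_val g k / sing_val g (k + 1) > L \<longrightarrow>
           (\<exists>\<delta>>\<epsilon>. \<forall>x\<in>K. \<delta> \<le> dist_to_proj x (Xi k g))"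
proof -
  obtain C where C: "C > 0"
    and CB: "\<And>h x u. h \<in> Aut \<Omega> \<Longrightarrow> x \<in> K \<Longrightarrow> norm (h *v u) * norm x \<le> C * norm u * norm (h *v x)"
    using cone_bound[OF assms] by blast
  have z: "0 \<notin> \<Omega>" using assms(1) unfolding properly_convex_domain_def cone_set_def by auto
  define \<epsilon> where "\<epsilon> = 1 / (2 * C)"
  define \<delta> where "\<delta> = sqrt (3 / (4 * C\<^sup>2))"
  have epos: "\<epsilon> > 0" unfolding \<epsilon>_def using C by simp
  have de: "\<delta> > \<epsilon>"
  proof -
    have "\<epsilon> = sqrt (1 / (4 * C\<^sup>2))"
      unfolding \<epsilon>_def using C by (simp add: real_sqrt_divide real_sqrt_mult)
    also have "\<dots> < \<delta>" unfolding \<delta>_def using C by (intro real_sqrt_less_mono divide_strict_right_mono) auto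
    finally show ?thesis .
  qed
  have main: "\<delta> \<le> dist_to_proj x (Xi k g)"
    if k: "k \<in> {1..CARD('n) - 1}" and gA: "g \<in> Aut \<Omega>" and rat: "sing_val g k / sing_val g (k + 1) > 2 * C"
      and x: "x \<in> K" for k g x
  proof -
    have inv: "invertible g" and gO: "(\<lambda>v. g *v v) ` \<Omega> = \<Omega>" using gA unfolding Aut_def by auto
    obtain h where gh: "g ** h = mat 1" and hg: "h ** g = mat 1" using inv unfolding invertible_def by blast
    have hA: "h \<in> Aut \<Omega>"
    proof -
      have "invertible h" unfolding invertible_def using gh hg by blast
      moreover have "(\<lambda>v. h *v v) ` \<Omega> = \<Omega>"
      proof
        show "(\<lambda>v. h *v v) ` \<Omega> \<subseteq> \<Omega>"
        proof
          fix y assume "y \<in> (\<lambda>v. h *v v) ` \<Omega>"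
          then obtain v where v: "v \<in> \<Omega>" "y = h *v v" by blast
          then obtain w where w: "w \<in> \<Omega>" "v = g *v w" using gO by blast
          have "y = w" using v w hg by (simp add: matrix_vector_mul_assoc)
          then show "y \<in> \<Omega>" using w by simp
        qed
        show "\<Omega> \<subseteq> (\<lambda>v. h *v v) ` \<Omega>"
        proof
          fix v assume v: "v \<in> \<Omega>"
          then have "g *v v \<in> \<Omega>" using gO by blast
          moreover have "v = h *v (g *v v)" using hg by (simp add: matrix_vector_mul_assoc)
          ultimately show "v \<in> (\<lambda>v. h *v v) ` \<Omega>" by blast
        qed
      qed
      ultimately show ?thesis unfolding Aut_def by blast
    qed
    define s where "s = sing_val g"
    have ex: "\<exists>Q Q'. cartan g Q s Q'"
    proof -
      obtain Q0 s0 Q0' where "cartan g Q0 s0 Q0'" using svd_exists[OF inv] by blast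
      then have "\<exists>s Q Q'. cartan g Q s Q'" by blast
      then show ?thesis unfolding s_def sing_val_def by (rule someI_ex)
    qed
    define V where "V = span {axis j (1::real) | j::'n. basis_pos j \<le> k}"
    have "\<exists>Q Q'. cartan g Q (sing_val g) Q' \<and> Xi k g = (\<lambda>v. Q *v v) ` V"
    proof -
      have "\<exists>W. \<exists>Q Q'. cartan g Q (sing_val g) Q' \<and> W = (\<lambda>v. Q *v v) ` V"
        using ex unfolding s_def by blast
      then show ?thesis unfolding Xi_def V_def by (rule someI_ex)
    qed
    then obtain Q Q' where c: "cartan g Q s Q'" and XiQ: "Xi k g = (\<lambda>v. Q *v v) ` V"
      unfolding s_def by blast
    have oQ: "orthogonal_matrix Q" and oQ': "orthogonal_matrix Q'"
      and dec: "\<And>i j. 1 \<le> i \<Longrightarrow> i \<le> j \<Longrightarrow> j \<le> CARD('n) \<Longrightarrow> s j \<le> s i"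
      using c unfolding cartan_def by auto
    have spos: "s m > 0" if "1 \<le> m" "m \<le> CARD('n)" for m
      using basis_pos_surj[OF that] cartan_pos[OF c inv] by (metis (full_types))
    have k1: "1 \<le> k" "k + 1 \<le> CARD('n)" using k by auto
    define d where "d = CARD('n)"
    have sk: "s k > 0" using spos k1 by auto
    have sk1: "s (k + 1) > 0" using spos k1 by auto
    have sd: "s d > 0" using spos k1 unfolding d_def by auto
    have sdk1: "s d \<le> s (k + 1)" using dec[of "k + 1" d] k1 unfolding d_def by auto
    have "s k / s (k + 1) > 2 * C" using rat unfolding s_def .
    then have "s (k + 1) * (2 * C) < s k" using sk1 by (simp add: pos_less_divide_eq mult.commute)
    moreover have "s d * (2 * C) \<le> s (k + 1) * (2 * C)" using sdk1 C by (intro mult_right_mono) auto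
    ultimately have "s d * (2 * C) < s k" by linarith
    then have rdk: "s d / s k < 1 / (2 * C)" using sk C by (simp add: field_simps)
    have rdk2: "(s d / s k)\<^sup>2 \<le> 1 / (4 * C\<^sup>2)"
    proof -
      have "(s d / s k)\<^sup>2 \<le> (1 / (2 * C))\<^sup>2"
        using rdk sd sk by (intro power_mono) auto
      then show ?thesis by (simp add: power2_eq_square)
    qed
    have "\<exists>m::'n. basis_pos m = d" using basis_pos_surj[of d, where 'n='n] k1 unfolding d_def by auto
    then obtain m :: 'n where m: "basis_pos m = d" by blast
    have xO: "x \<in> \<Omega>" using x assms(3) by blast
    then have x0: "x \<noteq> 0" using z by auto
    define y where "y = transpose Q *v x"
    have "Q ** transpose Q = mat 1" using oQ unfolding orthogonal_matrix_def by simp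
    then have xy: "x = Q *v y" unfolding y_def by (metis matrix_vector_mul_assoc matrix_vector_mul_lid)
    define A where "A = (\<Sum>j\<in>UNIV. if basis_pos j \<le> k then (y $ j)\<^sup>2 else 0)"
    define B where "B = (\<Sum>j\<in>UNIV. if basis_pos j \<le> k then 0 else (y $ j)\<^sup>2)"
    have AB: "A + B = (norm x)\<^sup>2"
    proof -
      have "A + B = (\<Sum>j\<in>UNIV. (y $ j)\<^sup>2)" unfolding A_def B_def sum.distrib[symmetric]
        by (rule sum.cong) auto
      also have "\<dots> = (norm y)\<^sup>2" by (simp add: norm_sq_vec)
      also have "\<dots> = (norm x)\<^sup>2" using xy orth_norm[OF oQ] by simp
      finally show ?thesis .
    qed
    have B0: "B \<ge> 0" unfolding B_def by (intro sum_nonneg) auto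
    have A0: "A \<ge> 0" unfolding A_def by (intro sum_nonneg) auto
    have nhx: "(norm (h *v x))\<^sup>2 = (\<Sum>j\<in>UNIV. (y $ j / s (basis_pos j))\<^sup>2)"
      using cartan_inv[OF c inv hg, of y] xy orth_norm[of "transpose Q'"] oQ'
      by (simp add: norm_sq_vec)
    have "(\<Sum>j\<in>UNIV. (y $ j / s (basis_pos j))\<^sup>2)
        \<le> (\<Sum>j\<in>UNIV. (if basis_pos j \<le> k then (y $ j)\<^sup>2 else 0) / (s k)\<^sup>2
                     + (if basis_pos j \<le> k then 0 else (y $ j)\<^sup>2) / (s d)\<^sup>2)"
    proof (rule sum_mono)
      fix j :: 'n
      have pj: "1 \<le> basis_pos j" "basis_pos j \<le> d" using basis_pos_range[of j] unfolding d_def by auto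
      have sj: "s (basis_pos j) > 0" using spos pj unfolding d_def by auto
      show "(y $ j / s (basis_pos j))\<^sup>2 \<le> (if basis_pos j \<le> k then (y $ j)\<^sup>2 else 0) / (s k)\<^sup>2
                     + (if basis_pos j \<le> k then 0 else (y $ j)\<^sup>2) / (s d)\<^sup>2"
      proof (cases "basis_pos j \<le> k")
        case True
        then have "s (basis_pos j) \<ge> s k" using dec[of "basis_pos j" k] pj k1 by auto
        then have "(s k)\<^sup>2 \<le> (s (basis_pos j))\<^sup>2" using sk by (intro power_mono) auto
        then have "(y $ j)\<^sup>2 / (s (basis_pos j))\<^sup>2 \<le> (y $ j)\<^sup>2 / (s k)\<^sup>2"
          using sk sj by (intro divide_left_mono) auto
        then show ?thesis using True by (simp add: power_divide)
      next
        case False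
        have "s (basis_pos j) \<ge> s d" using dec[of "basis_pos j" d] pj unfolding d_def by auto
        then have "(s d)\<^sup>2 \<le> (s (basis_pos j))\<^sup>2" using sd by (intro power_mono) auto
        then have "(y $ j)\<^sup>2 / (s (basis_pos j))\<^sup>2 \<le> (y $ j)\<^sup>2 / (s d)\<^sup>2"
          using sd sj by (intro divide_left_mono) auto
        then show ?thesis using False by (simp add: power_divide)
      qed
    qed
    also have "\<dots> = A / (s k)\<^sup>2 + B / (s d)\<^sup>2"
      unfolding A_def B_def by (simp add: sum.distrib sum_divide_distrib)
    finally have hxb: "(norm (h *v x))\<^sup>2 \<le> A / (s k)\<^sup>2 + B / (s d)\<^sup>2" using nhx by simp
    define u where "u = Q *v axis m 1"
    have nu: "norm u = 1" unfolding u_def using orth_norm[OF oQ] by simp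
    have "(\<chi> j. axis m 1 $ j / s (basis_pos j)) = (1 / s d) *\<^sub>R (axis m (1::real))"
      using m by (simp add: vec_eq_iff axis_def)
    then have "h *v u = transpose Q' *v ((1 / s d) *\<^sub>R axis m 1)"
      unfolding u_def using cartan_inv[OF c inv hg, of "axis m 1"] by simp
    then have nhu: "norm (h *v u) = 1 / s d"
      using orth_norm[of "transpose Q'"] oQ' sd by simp
    have "norm (h *v u) * norm x \<le> C * norm u * norm (h *v x)" using CB[OF hA x] .
    then have "norm x / s d \<le> C * norm (h *v x)" using nhu nu by simp
    then have "(norm x / s d)\<^sup>2 \<le> (C * norm (h *v x))\<^sup>2"
      using x0 sd by (intro power_mono) auto
    also have "\<dots> = C\<^sup>2 * (norm (h *v x))\<^sup>2" by (simp add: power_mult_distrib)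
    also have "\<dots> \<le> C\<^sup>2 * (A / (s k)\<^sup>2 + B / (s d)\<^sup>2)" using hxb by (intro mult_left_mono) auto
    finally have i1: "(norm x / s d)\<^sup>2 \<le> C\<^sup>2 * (A / (s k)\<^sup>2 + B / (s d)\<^sup>2)" .
    have i2: "(norm x)\<^sup>2 \<le> C\<^sup>2 * (A * (s d / s k)\<^sup>2 + B)"
    proof -
      have "(norm x)\<^sup>2 = (norm x / s d)\<^sup>2 * (s d)\<^sup>2" using sd by (simp add: power_divide)
      also have "\<dots> \<le> C\<^sup>2 * (A / (s k)\<^sup>2 + B / (s d)\<^sup>2) * (s d)\<^sup>2"
        using i1 by (intro mult_right_mono) auto
      also have "\<dots> = C\<^sup>2 * (A * (s d / s k)\<^sup>2 + B)"
        using sd sk by (simp add: power_divide field_simps)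
      finally show ?thesis .
    qed
    have "A * (s d / s k)\<^sup>2 \<le> A * (1 / (4 * C\<^sup>2))" using rdk2 A0 by (intro mult_left_mono) auto
    then have "A * (s d / s k)\<^sup>2 + B \<le> A / (4 * C\<^sup>2) + B" by simp
    then have "C\<^sup>2 * (A * (s d / s k)\<^sup>2 + B) \<le> C\<^sup>2 * (A / (4 * C\<^sup>2) + B)"
      by (intro mult_left_mono) auto
    then have "(norm x)\<^sup>2 \<le> C\<^sup>2 * (A / (4 * C\<^sup>2) + B)" using i2 by linarith
    also have "\<dots> = A / 4 + C\<^sup>2 * B" using C by (simp add: field_simps)
    finally have "(norm x)\<^sup>2 \<le> A / 4 + C\<^sup>2 * B" .
    then have i3: "3 * (norm x)\<^sup>2 \<le> 4 * C\<^sup>2 * B" using AB B0 C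
      by linarith
    have nx: "(norm x)\<^sup>2 > 0" using x0 by simp
    have Bb: "3 / (4 * C\<^sup>2) \<le> B / (norm x)\<^sup>2"
      using i3 nx C by (simp add: field_simps)
    have dB: "\<delta> \<le> sqrt (B / (norm x)\<^sup>2)" unfolding \<delta>_def using Bb by (rule real_sqrt_le_mono)
    obtain j1 :: 'n where j1: "basis_pos j1 = 1" using basis_pos_surj[of 1] k1 by auto
    have "axis j1 1 \<in> V" unfolding V_def using j1 k1 by (intro span_base) auto
    moreover have "Q *v axis j1 1 \<noteq> 0" using orth_norm[OF oQ, of "axis j1 1"] by auto
    ultimately have nemp: "{proj_dist x v | v. v \<in> Xi k g \<and> v \<noteq> 0} \<noteq> {}" unfolding XiQ by blast
    show ?thesis unfolding dist_to_proj_def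
    proof (rule cInf_greatest[OF nemp])
      fix r assume "r \<in> {proj_dist x v | v. v \<in> Xi k g \<and> v \<noteq> 0}"
      then obtain v where v: "v \<in> Xi k g" "v \<noteq> 0" "r = proj_dist x v" by blast
      have "sqrt (B / (norm x)\<^sup>2) \<le> proj_dist x v"
        using proj_bound[OF oQ x0 _ v(2), of k] v(1) unfolding XiQ V_def B_def y_def by blast
      then show "\<delta> \<le> r" using dB v(3) by simp
    qed
  qed
  show ?thesis
    apply (rule exI[of _ \<epsilon>])
    apply (intro conjI epos)
    apply (rule exI[of _ "2 * C"])
    using C main de by auto
qed


end
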